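(* Let $\nu$ be a positive Borel measure on $\mathbb{C}$, finite on compact sets. The following three statements are pairwise equivalent: (b1) the balayage $\nu^{\mathrm{bal}}$ of $\nu$ from $\mathbb{C}^{\mathrm{up}}$ exists as a positive measure, i.e. $\nu^{\mathrm{bal}}(B)<+\infty$ for every bounded Borel set $B\subset\mathbb{C}$; (b2) for some bounded Borel set $B\subset\mathbb{R}$ of positive Lebesgue measure, $\int_{\mathbb{C}^{\mathrm{up}}}\omega(z,B)\,d\nu(z)<+\infty$; (b3) $\nu$ satisfies the Blaschke condition near infinity in $\mathbb{C}^{\mathrm{up}}$: $\int_{\mathbb{C}^{\mathrm{up}}\setminus D(r_0)}\operatorname{Im}\frac{1}{\bar z}\,d\nu(z)<+\infty$ for some $r_0>0$.
   Context: $\mathbb{C}^{\mathrm{up}}=\{\operatorname{Im}z>0\}$, $\mathbb{C}_{\overline{\mathrm{lw}}}=\{\operatorname{Im}z\le 0\}$, $D(r)$ the open disc of radius $r$ centred at $0$. For $z\in\mathbb{C}^{\mathrm{up}}$ and Borel $B\subset\mathbb{C}$ the harmonic measure is $\omega(z,B)=\frac1\pi\int_{B\cap\mathbb{R}}\frac{\operatorname{Im}z}{(t-\operatorname{Re}z)^2+(\operatorname{Im}z)^2}\,dt$. The balayage from $\mathbb{C}^{\mathrm{up}}$ is $\nu^{\mathrm{bal}}(B):=\int_{\mathbb{C}^{\mathrm{up}}}\omega(z,B)\,d\nu(z)+\nu(B\cap\mathbb{C}_{\overline{\mathrm{lw}}})$. *)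

theory Defs
  imports "HOL-Analysis.Analysis"
begin

definition upper_half :: "complex set" where
  "upper_half = {z. Im z > 0}"

definition closed_lower_half :: "complex set" where
  "closed_lower_half = {z. Im z \<le> 0}"

definition harm_measure :: "complex \<Rightarrow> complex set \<Rightarrow> ennreal" where
  "harm_measure z B =
     (\<integral>\<^sup>+ t \<in> {t::real. complex_of_real t \<in> B}.
        ennreal (Im z / (pi * ((t - Re z)\<^sup>2 + (Im z)\<^sup>2))) \<partial>lborel)"

definition balayage :: "complex measure \<Rightarrow> complex set \<Rightarrow> ennreal" where
  "balayage nu B =
     (\<integral>\<^sup>+ z \<in> upper_half. harm_measure z B \<partial>nu) + emeasure nu (B \<inter> closed_lower_half)"

end

theory Submission
  imports Defs
begin
lemma im_inv: "Im (1 / cnj z) = Im z / (cmod z)\<^sup>2"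
  by (simp add: Im_divide cmod_power2)
lemma kern_eq: "(t - Re z)\<^sup>2 + (Im z)\<^sup>2 = (cmod (z - complex_of_real t))\<^sup>2"
  by (simp add: cmod_power2 power2_commute)
lemma poisson_Icc:
  assumes "Im z > 0" "a \<le> b"
  shows "(\<integral>\<^sup>+t. ennreal (Im z / (pi * ((t - Re z)\<^sup>2 + (Im z)\<^sup>2))) * indicator {a..b} t \<partial>lborel) \<le> 1"
proof -
  let ?F = "\<lambda>t. arctan ((t - Re z) / Im z) / pi"
  have d: "DERIV ?F t :> Im z / (pi * ((t - Re z)\<^sup>2 + (Im z)\<^sup>2))" for t
  proof -
    have "DERIV ?F t :> inverse (1 + ((t - Re z) / Im z)\<^sup>2) * (1 / Im z) / pi"
      using assms by (auto intro!: derivative_eq_intros)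
    moreover have "inverse (1 + ((t - Re z) / Im z)\<^sup>2) * (1 / Im z) / pi = Im z / (pi * ((t - Re z)\<^sup>2 + (Im z)\<^sup>2))"
      using assms by (simp add: field_simps power2_eq_square)
    ultimately show ?thesis by simp
  qed
  have eq: "(\<integral>\<^sup>+t. ennreal (Im z / (pi * ((t - Re z)\<^sup>2 + (Im z)\<^sup>2))) * indicator {a..b} t \<partial>lborel) = ?F b - ?F a"
    by (rule nn_integral_FTC_Icc[OF _ d]) (use assms in \<open>auto intro!: divide_nonneg_pos add_nonneg_pos\<close>)
  have le: "?F b - ?F a \<le> 1"
  proof -
    have "arctan ((b - Re z) / Im z) - arctan ((a - Re z) / Im z) < pi"
      using arctan_bounded[of "(b - Re z) / Im z"] arctan_bounded[of "(a - Re z) / Im z"] by linarith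
    then show ?thesis by (simp add: diff_divide_distrib[symmetric])
  qed
  show ?thesis unfolding eq using le by (metis ennreal_1 ennreal_leI)
qed
definition kern :: "complex \<Rightarrow> real \<Rightarrow> real" where
  "kern z t = Im z / (pi * ((t - Re z)\<^sup>2 + (Im z)\<^sup>2))"

lemma harm_eq: "harm_measure z B = (\<integral>\<^sup>+t. ennreal (kern z t) * indicator {t. complex_of_real t \<in> B} t \<partial>lborel)"
  by (simp add: harm_measure_def kern_def)

lemma harm_le_1:
  assumes "Im z > 0" "\<And>t. complex_of_real t \<in> B \<Longrightarrow> \<bar>t\<bar> \<le> R"
  shows "harm_measure z B \<le> 1"
proof (cases "R \<ge> 0")
  case True
  have "harm_measure z B \<le> (\<integral>\<^sup>+t. ennreal (kern z t) * indicator {-R..R} t \<partial>lborel)"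
    unfolding harm_eq
    by (intro nn_integral_mono) (auto split: split_indicator dest: assms(2))
  also have "\<dots> \<le> 1" unfolding kern_def by (rule poisson_Icc) (use assms True in auto)
  finally show ?thesis .
next
  case False
  then have "{t. complex_of_real t \<in> B} = {}" using assms(2) by force
  then show ?thesis unfolding harm_eq by simp
qed

lemma harm_upper:
  assumes "Im z > 0" "\<And>t. complex_of_real t \<in> B \<Longrightarrow> \<bar>t\<bar> \<le> R" "R \<ge> 0" "cmod z \<ge> 2 * R"
  shows "harm_measure z B \<le> ennreal (8 * R / pi) * ennreal (Im (1 / cnj z))"
proof -
  have z0: "cmod z > 0" using assms(1) by (metis abs_Im_le_cmod abs_of_pos less_le_trans)
  have k: "kern z t \<le> 4 * Im z / (pi * (cmod z)\<^sup>2)" if "\<bar>t\<bar> \<le> R" for t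
  proof -
    have "cmod z / 2 \<le> cmod z - \<bar>t\<bar>" using that assms by linarith
    also have "\<dots> \<le> cmod (z - complex_of_real t)"
      using norm_triangle_ineq2[of z "complex_of_real t"] by simp
    finally have "(cmod z / 2)\<^sup>2 \<le> (cmod (z - complex_of_real t))\<^sup>2"
      using z0 by (intro power_mono) auto
    then have "(cmod z)\<^sup>2 / 4 \<le> (t - Re z)\<^sup>2 + (Im z)\<^sup>2" by (simp add: kern_eq power_divide)
    moreover have "(cmod z)\<^sup>2 / 4 > 0" using z0 by simp
    ultimately have "Im z / (pi * ((t - Re z)\<^sup>2 + (Im z)\<^sup>2)) \<le> Im z / (pi * ((cmod z)\<^sup>2 / 4))"
      using assms(1) by (intro divide_left_mono mult_left_mono mult_pos_pos) (auto intro: add_nonneg_pos)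
    then show ?thesis unfolding kern_def by (simp add: mult.commute)
  qed
  have "harm_measure z B \<le> (\<integral>\<^sup>+t. ennreal (4 * Im z / (pi * (cmod z)\<^sup>2)) * indicator {-R..R} t \<partial>lborel)"
    unfolding harm_eq
    by (intro nn_integral_mono) (auto split: split_indicator dest: assms(2) intro!: ennreal_leI k)
  also have "\<dots> = ennreal (4 * Im z / (pi * (cmod z)\<^sup>2)) * ennreal (2 * R)"
    using assms(3) by (simp add: nn_integral_cmult_indicator)
  also have "\<dots> = ennreal (8 * R / pi) * ennreal (Im (1 / cnj z))"
    using assms z0 by (simp add: im_inv ennreal_mult'[symmetric] divide_nonneg_pos)
  finally show ?thesis .
qed

lemma harm_lower:
  assumes "Im z > 0" "\<And>t. t \<in> S \<Longrightarrow> \<bar>t\<bar> \<le> R" "cmod z \<ge> R" "S \<in> sets borel"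
  shows "ennreal (Im (1 / cnj z) / (4 * pi)) * emeasure lborel S \<le> harm_measure z (complex_of_real ` S)"
proof -
  have z0: "cmod z > 0" using assms(1) by (metis abs_Im_le_cmod abs_of_pos less_le_trans)
  have k: "Im z / (4 * pi * (cmod z)\<^sup>2) \<le> kern z t" if "t \<in> S" for t
  proof -
    have "cmod (z - complex_of_real t) \<le> cmod z + \<bar>t\<bar>"
      using norm_triangle_ineq4[of z "complex_of_real t"] by simp
    also have "\<dots> \<le> 2 * cmod z" using assms(2)[OF that] assms(3) by linarith
    finally have "(cmod (z - complex_of_real t))\<^sup>2 \<le> (2 * cmod z)\<^sup>2"
      by (intro power_mono) auto
    then have "(t - Re z)\<^sup>2 + (Im z)\<^sup>2 \<le> 4 * (cmod z)\<^sup>2" by (simp add: kern_eq power_mult_distrib)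
    moreover have "(t - Re z)\<^sup>2 + (Im z)\<^sup>2 > 0" using assms(1) by (simp add: add_nonneg_pos)
    ultimately show ?thesis unfolding kern_def using assms(1) z0
      by (simp add: frac_le divide_simps)
  qed
  have "ennreal (Im (1 / cnj z) / (4 * pi)) * emeasure lborel S = (\<integral>\<^sup>+t. ennreal (Im z / (4 * pi * (cmod z)\<^sup>2)) * indicator S t \<partial>lborel)"
  proof -
    have "Im (1 / cnj z) / (4 * pi) = Im z / (4 * pi * (cmod z)\<^sup>2)" by (simp add: im_inv)
    then show ?thesis using nn_integral_cmult_indicator[OF assms(4)[unfolded sets_lborel[symmetric]], of "ennreal (Im z / (4 * pi * (cmod z)\<^sup>2))"]
      by simp
  qed
  also have "\<dots> \<le> harm_measure z (complex_of_real ` S)"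
    unfolding harm_eq
    by (intro nn_integral_mono) (auto split: split_indicator intro!: ennreal_leI k)
  finally show ?thesis .
qed
lemma upper_borel: "upper_half \<in> sets borel"
  unfolding upper_half_def by (intro borel_open open_halfspace_Im_gt)

lemma lower_borel: "closed_lower_half \<in> sets borel"
  unfolding closed_lower_half_def by (intro borel_closed closed_halfspace_Im_le)

theorem corollary1:
  fixes nu :: "complex measure"
  assumes sets_nu: "sets nu = sets borel"
    and loc_fin: "\<And>K. compact K \<Longrightarrow> emeasure nu K < \<infinity>"
  defines "b1 \<equiv> (\<forall>B \<in> sets borel. bounded B \<longrightarrow> balayage nu B < \<infinity>)"
    and "b2 \<equiv> (\<exists>B :: real set. B \<in> sets borel \<and> bounded B \<and> emeasure lborel B > 0 \<and>
                 (\<integral>\<^sup>+ z \<in> upper_half. harm_measure z (complex_of_real ` B) \<partial>nu) < \<infinity>)"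
    and "b3 \<equiv> (\<exists>r0 > 0. (\<integral>\<^sup>+ z \<in> upper_half - ball 0 r0.
                 ennreal (Im (1 / cnj z)) \<partial>nu) < \<infinity>)"
  shows "(b1 \<longleftrightarrow> b2) \<and> (b2 \<longleftrightarrow> b3) \<and> (b1 \<longleftrightarrow> b3)"
proof -
  have meas: "(\<lambda>z. ennreal (Im (1 / cnj z)) * indicator (upper_half - ball 0 r) z) \<in> borel_measurable nu" for r
  proof -
    have "(\<lambda>z. ennreal (Im (1 / cnj z)) * indicator (upper_half - ball 0 r) z) \<in> borel_measurable borel"
    proof -
      have [measurable]: "upper_half - ball 0 r \<in> sets borel" using upper_borel by auto
      show ?thesis unfolding im_inv by measurable
    qed
    then show ?thesis by (subst measurable_cong_sets[OF sets_nu refl])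
  qed
  have sets_cball: "cball 0 r \<in> sets nu" for r :: real using sets_nu by simp
  have 12: "b2" if "b1"
  proof -
    let ?B = "{0..1::real}"
    have c: "compact (complex_of_real ` ?B)"
      by (intro compact_continuous_image continuous_on_of_real continuous_on_id compact_Icc)
    have "complex_of_real ` ?B \<in> sets borel"
      using c by (intro borel_closed compact_imp_closed)
    moreover have "bounded (complex_of_real ` ?B)"
      using c by (rule compact_imp_bounded)
    ultimately have bal: "balayage nu (complex_of_real ` ?B) < \<infinity>" using that unfolding b1_def by blast
    have "(\<integral>\<^sup>+ z \<in> upper_half. harm_measure z (complex_of_real ` ?B) \<partial>nu) \<le> balayage nu (complex_of_real ` ?B)"
      unfolding balayage_def by (rule add_increasing2[OF zero_le order.refl])
    then have fin: "(\<integral>\<^sup>+ z \<in> upper_half. harm_measure z (complex_of_real ` ?B) \<partial>nu) < \<infinity>"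
      using bal by (rule order.strict_trans1)
    have "?B \<in> sets borel" by simp
    moreover have "bounded ?B" by simp
    moreover have "emeasure lborel ?B > 0" by simp
    ultimately show ?thesis unfolding b2_def using fin by blast
  qed
  have 23: "b3" if h2: "b2"
  proof -
    obtain B :: "real set" where B: "B \<in> sets borel" "bounded B" "emeasure lborel B > 0"
      and fin: "(\<integral>\<^sup>+ z \<in> upper_half. harm_measure z (complex_of_real ` B) \<partial>nu) < \<infinity>"
      using h2 unfolding b2_def by blast
    obtain R0 where R0: "\<And>t. t \<in> B \<Longrightarrow> \<bar>t\<bar> \<le> R0" using B(2) unfolding bounded_iff by auto
    define R where "R = max R0 1"
    have R: "R > 0" "\<And>t. t \<in> B \<Longrightarrow> \<bar>t\<bar> \<le> R"
      unfolding R_def using R0 by (simp, meson max.coboundedI1)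
    have "emeasure lborel B < \<infinity>" using B(2) by (rule emeasure_bounded_finite)
    define m where "m = enn2real (emeasure lborel B)"
    have m: "emeasure lborel B = ennreal m" "m > 0"
      using B(3) \<open>emeasure lborel B < \<infinity>\<close> unfolding m_def
      by (simp add: ennreal_enn2real less_top, simp add: enn2real_positive_iff)
    have pw: "ennreal (m / (4 * pi)) * (ennreal (Im (1 / cnj z)) * indicator (upper_half - ball 0 R) z)
         \<le> harm_measure z (complex_of_real ` B) * indicator upper_half z" for z
    proof (cases "z \<in> upper_half - ball 0 R")
      case True
      then have z: "Im z > 0" "cmod z \<ge> R" by (auto simp: upper_half_def)
      have "m / (4 * pi) * Im (1 / cnj z) = Im (1 / cnj z) / (4 * pi) * m" by simp
      moreover have "Im (1 / cnj z) \<ge> 0" using z by (simp add: im_inv)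
      ultimately have "ennreal (m / (4 * pi)) * ennreal (Im (1 / cnj z)) = ennreal (Im (1 / cnj z) / (4 * pi)) * emeasure lborel B"
      proof -
        assume e: "m / (4 * pi) * Im (1 / cnj z) = Im (1 / cnj z) / (4 * pi) * m" and i: "Im (1 / cnj z) \<ge> 0"
        have "ennreal (m / (4 * pi)) * ennreal (Im (1 / cnj z)) = ennreal (m / (4 * pi) * Im (1 / cnj z))"
          using m i by (intro ennreal_mult[symmetric]) auto
        also have "\<dots> = ennreal (Im (1 / cnj z) / (4 * pi) * m)" using e by (simp only:)
        also have "\<dots> = ennreal (Im (1 / cnj z) / (4 * pi)) * ennreal m"
          using m i by (intro ennreal_mult) auto
        finally show ?thesis using m(1) by simp
      qed
      also have "\<dots> \<le> harm_measure z (complex_of_real ` B)"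
        by (rule harm_lower) (use z R B in auto)
      finally show ?thesis using True by simp
    qed simp
    have "ennreal (m / (4 * pi)) * (\<integral>\<^sup>+ z \<in> upper_half - ball 0 R. ennreal (Im (1 / cnj z)) \<partial>nu)
        = (\<integral>\<^sup>+ z. ennreal (m / (4 * pi)) * (ennreal (Im (1 / cnj z)) * indicator (upper_half - ball 0 R) z) \<partial>nu)"
      by (rule nn_integral_cmult[symmetric]) (rule meas)
    also have "\<dots> \<le> (\<integral>\<^sup>+ z \<in> upper_half. harm_measure z (complex_of_real ` B) \<partial>nu)"
      by (intro nn_integral_mono pw)
    also have "\<dots> < \<infinity>" by (rule fin)
    finally have "(\<integral>\<^sup>+ z \<in> upper_half - ball 0 R. ennreal (Im (1 / cnj z)) \<partial>nu) < \<infinity>"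
      using m by (auto simp add: ennreal_mult_less_top)
    then show ?thesis unfolding b3_def using R by blast
  qed
  have 31: "b1" if h3: "b3"
  proof -
    obtain r0 where r0: "r0 > 0" and fin: "(\<integral>\<^sup>+ z \<in> upper_half - ball 0 r0. ennreal (Im (1 / cnj z)) \<partial>nu) < \<infinity>"
      using h3 unfolding b3_def by blast
    show ?thesis unfolding b1_def
    proof (intro ballI impI)
      fix B :: "complex set" assume "B \<in> sets borel" "bounded B"
      obtain R0 where R0: "\<And>z. z \<in> B \<Longrightarrow> cmod z \<le> R0" using \<open>bounded B\<close> unfolding bounded_iff by auto
      define R where "R = max R0 0"
      have R: "R \<ge> 0" "\<And>z. z \<in> B \<Longrightarrow> cmod z \<le> R"
        unfolding R_def using R0 by (simp, meson max.coboundedI1)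
      have Rt: "\<bar>t\<bar> \<le> R" if "complex_of_real t \<in> B" for t using R(2)[OF that] by simp
      define r where "r = max r0 (2 * R)"
      have pw: "harm_measure z B * indicator upper_half z \<le> indicator (cball 0 r) z
          + ennreal (8 * R / pi) * (ennreal (Im (1 / cnj z)) * indicator (upper_half - ball 0 r0) z)" for z
      proof (cases "z \<in> upper_half")
        case True
        then have z: "Im z > 0" by (auto simp: upper_half_def)
        show ?thesis
        proof (cases "cmod z \<le> r")
          case True
          have i: "indicator upper_half z = (1::ennreal)" "indicator (cball 0 r) z = (1::ennreal)"
            using True \<open>z \<in> upper_half\<close> by simp_all
          have "harm_measure z B \<le> 1 + ennreal (8 * R / pi) * (ennreal (Im (1 / cnj z)) * indicator (upper_half - ball 0 r0) z)"
            using harm_le_1[OF z Rt] by (rule order_trans[OF _ add_increasing2[OF zero_le order.refl]])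
          then show ?thesis unfolding i by simp
        next
          case False
          have "harm_measure z B \<le> ennreal (8 * R / pi) * ennreal (Im (1 / cnj z))"
            by (rule harm_upper[OF z Rt R(1)]) (use False in \<open>auto simp: r_def\<close>)
          moreover have i: "indicator upper_half z = (1::ennreal)" "indicator (upper_half - ball 0 r0) z = (1::ennreal)"
            using False \<open>z \<in> upper_half\<close> unfolding r_def by simp_all
          ultimately have "harm_measure z B \<le> indicator (cball 0 r) z + ennreal (8 * R / pi) * (ennreal (Im (1 / cnj z)) * indicator (upper_half - ball 0 r0) z)"
            by (intro order_trans[OF _ add_increasing[OF zero_le order.refl]]) simp
          then show ?thesis unfolding i by simp
        qed
      qed simp
      have "(\<integral>\<^sup>+ z \<in> upper_half. harm_measure z B \<partial>nu) \<le> (\<integral>\<^sup>+ z. indicator (cball 0 r) z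
          + ennreal (8 * R / pi) * (ennreal (Im (1 / cnj z)) * indicator (upper_half - ball 0 r0) z) \<partial>nu)"
        by (intro nn_integral_mono pw)
      also have "\<dots> = emeasure nu (cball 0 r) + ennreal (8 * R / pi) * (\<integral>\<^sup>+ z \<in> upper_half - ball 0 r0. ennreal (Im (1 / cnj z)) \<partial>nu)"
      proof -
        have "(\<integral>\<^sup>+ z. indicator (cball 0 r) z
          + ennreal (8 * R / pi) * (ennreal (Im (1 / cnj z)) * indicator (upper_half - ball 0 r0) z) \<partial>nu)
          = (\<integral>\<^sup>+ z. indicator (cball 0 r) z \<partial>nu) + (\<integral>\<^sup>+ z. ennreal (8 * R / pi) * (ennreal (Im (1 / cnj z)) * indicator (upper_half - ball 0 r0) z) \<partial>nu)"
          by (rule nn_integral_add[OF borel_measurable_indicator[OF sets_cball] borel_measurable_times_ennreal[OF borel_measurable_const meas]])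
        also have "\<dots> = emeasure nu (cball 0 r) + ennreal (8 * R / pi) * (\<integral>\<^sup>+ z \<in> upper_half - ball 0 r0. ennreal (Im (1 / cnj z)) \<partial>nu)"
          by (simp only: nn_integral_indicator[OF sets_cball] nn_integral_cmult[OF meas])
        finally show ?thesis .
      qed
      also have "\<dots> < \<infinity>"
        using loc_fin[of "cball 0 r"] fin by (simp add: ennreal_mult_less_top top.not_eq_extremum)
      finally have f1: "(\<integral>\<^sup>+ z \<in> upper_half. harm_measure z B \<partial>nu) < \<infinity>" .
      have "emeasure nu (B \<inter> closed_lower_half) \<le> emeasure nu (cball 0 R)"
        using R(2) sets_cball by (intro emeasure_mono) force+
      also have "\<dots> < \<infinity>" using loc_fin by simp
      finally show "balayage nu B < \<infinity>" using f1 unfolding balayage_def by (simp add: top.not_eq_extremum)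
    qed
  qed
  show ?thesis using 12 23 31 by blast
qed
end
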